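(* Let $X,Y,Z$ be topological spaces and $f:X\times Y\to Z$ a mapping. Suppose that for each $x\in X$, $f_x$ is quasicontinuous and there is a dense set $D_x\subset Y$ such that $f^y$ is quasicontinuous at $x$ for every $y\in D_x$. Then $f$ is lower $X$-quasicontinuous (at every point of $X\times Y$); equivalently, for every nonempty open $V\subset Y$ the set-valued mapping $X\ni x\mapsto f_x(V)\in 2^Z$ is lower quasicontinuous.
   Context: $f_x:Y\to Z$ and $f^y:X\to Z$ are given by $f_x(y)=f^y(x)=f(x,y)$; $2^Z$ is the set of nonempty subsets of $Z$. A mapping $g:X\to Z$ is quasicontinuous at $a$ if for each neighborhood $U$ of $a$ and each neighborhood $W$ of $g(a)$ there is an open $O$ with $\emptyset\neq O\subset U$ and $g(O)\subset W$; $g$ is quasicontinuous if it is so at every point. A set-valued $F:X\to 2^Z$ is lower quasicontinuous if for each $x_0\in X$, each neighborhood $U$ of $x_0$ and each open $W\subset Z$ with $F(x_0)\cap W\ne\emptyset$, there is an open $O$ with $\emptyset\ne O\subset U$ and $F(x)\cap W\ne\emptyset$ for all $x\in O$. $f$ is lower $X$-quasicontinuous at $(a,b)$ if for each neighborhood $U$ of $a$, $V$ of $b$, $W$ of $f(a,b)$, there is an open $O\subset X$ with $\emptyset\ne O\subset U$ and $f(\{x\}\times V)\cap W\ne\emptyset$ for all $x\in O$. *)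

theory Defs
  imports "HOL-Analysis.Analysis"
begin

(* Neighborhoods are taken to be open sets containing the point; since all
   notions below are monotone in the neighborhoods, this is equivalent to
   arbitrary neighborhoods. *)

definition quasicont_at :: "('a::topological_space \<Rightarrow> 'b::topological_space) \<Rightarrow> 'a \<Rightarrow> bool" where
  "quasicont_at g a \<longleftrightarrow>
     (\<forall>U W. open U \<longrightarrow> a \<in> U \<longrightarrow> open W \<longrightarrow> g a \<in> W \<longrightarrow>
        (\<exists>G. open G \<and> G \<noteq> {} \<and> G \<subseteq> U \<and> g ` G \<subseteq> W))"

definition quasicont :: "('a::topological_space \<Rightarrow> 'b::topological_space) \<Rightarrow> bool" where
  "quasicont g \<longleftrightarrow> (\<forall>a. quasicont_at g a)"

definition lower_quasicont :: "('a::topological_space \<Rightarrow> 'b::topological_space set) \<Rightarrow> bool" where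
  "lower_quasicont F \<longleftrightarrow>
     (\<forall>x0 U W. open U \<longrightarrow> x0 \<in> U \<longrightarrow> open W \<longrightarrow> F x0 \<inter> W \<noteq> {} \<longrightarrow>
        (\<exists>G. open G \<and> G \<noteq> {} \<and> G \<subseteq> U \<and> (\<forall>x\<in>G. F x \<inter> W \<noteq> {})))"

definition lower_X_quasicont_at ::
  "('a::topological_space \<Rightarrow> 'b::topological_space \<Rightarrow> 'c::topological_space) \<Rightarrow> 'a \<Rightarrow> 'b \<Rightarrow> bool" where
  "lower_X_quasicont_at f a b \<longleftrightarrow>
     (\<forall>U V W. open U \<longrightarrow> a \<in> U \<longrightarrow> open V \<longrightarrow> b \<in> V \<longrightarrow> open W \<longrightarrow> f a b \<in> W \<longrightarrow>
        (\<exists>G. open G \<and> G \<noteq> {} \<and> G \<subseteq> U \<and> (\<forall>x\<in>G. f x ` V \<inter> W \<noteq> {})))"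

end

theory Submission
  imports Defs
begin

lemma part1:
  fixes f :: "'a::topological_space \<Rightarrow> 'b::topological_space \<Rightarrow> 'c::topological_space"
  assumes sect: "\<And>x. quasicont (\<lambda>y. f x y)"
    and dense: "\<And>x. \<exists>D. closure D = UNIV \<and> (\<forall>y\<in>D. quasicont_at (\<lambda>x'. f x' y) x)"
  shows "lower_X_quasicont_at f a b"
  unfolding lower_X_quasicont_at_def
proof (intro allI impI)
  fix U V W assume U: "open U" "a \<in> U" and V: "open V" "b \<in> V" and W: "open W" "f a b \<in> W"
  from sect[of a] have "quasicont_at (f a) b" unfolding quasicont_def by auto
  then obtain G where G: "open G" "G \<noteq> {}" "G \<subseteq> V" "f a ` G \<subseteq> W"
    using V W unfolding quasicont_at_def by meson
  obtain D where D: "closure D = UNIV" "\<forall>y\<in>D. quasicont_at (\<lambda>x'. f x' y) a"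
    using dense by blast
  have "D \<inter> G \<noteq> {}"
    proof (rule notI)
    assume "D \<inter> G = {}"
    then have "closure D \<subseteq> - G" using G(1) by (intro closure_minimal) (auto simp: open_closed)
    then show False using D(1) G(2) by auto
  qed
  then obtain y where y: "y \<in> D" "y \<in> G" by blast
  have "f a y \<in> W" using G(4) y by auto
  obtain Q where Q: "open Q" "Q \<noteq> {}" "Q \<subseteq> U" "(\<lambda>x'. f x' y) ` Q \<subseteq> W"
  proof -
    have "quasicont_at (\<lambda>x'. f x' y) a" using D(2) y(1) by blast
    then show ?thesis using that U \<open>f a y \<in> W\<close> W(1) unfolding quasicont_at_def by meson
  qed
  show "\<exists>G. open G \<and> G \<noteq> {} \<and> G \<subseteq> U \<and> (\<forall>x\<in>G. f x ` V \<inter> W \<noteq> {})"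
  proof (rule exI[of _ Q], intro conjI ballI)
    fix x assume "x \<in> Q"
    then have "f x y \<in> f x ` V \<inter> W" using Q(4) y(2) G(3) by auto
    then show "f x ` V \<inter> W \<noteq> {}" by blast
  qed (use Q in auto)
qed

theorem corollary2p4:
  fixes f :: "'a::topological_space \<Rightarrow> 'b::topological_space \<Rightarrow> 'c::topological_space"
  assumes sect: "\<And>x. quasicont (\<lambda>y. f x y)"
    and dense: "\<And>x. \<exists>D. closure D = UNIV \<and> (\<forall>y\<in>D. quasicont_at (\<lambda>x'. f x' y) x)"
  shows "(\<forall>a b. lower_X_quasicont_at f a b)
       \<and> (\<forall>V. open V \<and> V \<noteq> {} \<longrightarrow> lower_quasicont (\<lambda>x. f x ` V))"
proof -
  have P: "\<And>a b. lower_X_quasicont_at f a b" using part1[OF sect dense] by blast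
  have "lower_quasicont (\<lambda>x. f x ` V)" if "open V" for V
    unfolding lower_quasicont_def
  proof (intro allI impI)
    fix x0 U W assume U: "open U" "x0 \<in> U" and W: "open W" and ne: "f x0 ` V \<inter> W \<noteq> {}"
    then obtain v where v: "v \<in> V" "f x0 v \<in> W" by blast
    show "\<exists>G. open G \<and> G \<noteq> {} \<and> G \<subseteq> U \<and> (\<forall>x\<in>G. f x ` V \<inter> W \<noteq> {})"
    proof -
      have "\<forall>U V W. open U \<longrightarrow> x0 \<in> U \<longrightarrow> open V \<longrightarrow> v \<in> V \<longrightarrow> open W \<longrightarrow> f x0 v \<in> W \<longrightarrow>
        (\<exists>G. open G \<and> G \<noteq> {} \<and> G \<subseteq> U \<and> (\<forall>x\<in>G. f x ` V \<inter> W \<noteq> {}))"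
        using P[of x0 v] unfolding lower_X_quasicont_at_def .
      then show ?thesis using U W v that by simp
    qed
  qed
  then show ?thesis using P by blast
qed

end
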